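(* Let $d\ge 1$ and let $(X_1,\ldots,X_d,Y)$ be a random vector with continuous marginal distribution functions $F_{X_1},\ldots,F_{X_d},F_Y$ and $(d+1)$-dimensional copula $C$. Let $(U_1,\ldots,U_d,V)$ be a random vector with standard uniform marginals and copula $C$. Fix $\boldsymbol{\alpha}=(\alpha_1,\ldots,\alpha_d)\in[0,1)^d$ with $C(\boldsymbol{\alpha},1)<1$, and let $A_{\boldsymbol U}=\{\exists\, i: U_i>\alpha_i\}$ and $A_{\boldsymbol X}=\{\exists\, i: X_i>\mathrm{VaR}_{\alpha_i}(X_i)\}$. Then: (a) the distribution function of $V$ conditional on $A_{\boldsymbol U}$ is $$F_{V|A_{\boldsymbol U}}(v)=\frac{v-C(\boldsymbol{\alpha},v)}{1-C(\boldsymbol{\alpha},1)},\qquad v\in[0,1],$$ and this function is a distortion function; (b) the distribution function of $Y$ conditional on $A_{\boldsymbol X}$ is $F_{Y|A_{\boldsymbol X}}(y)=F_{V|A_{\boldsymbol U}}(F_Y(y))$ for all $y\in\mathbb{R}$.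
   Context: For a $(d+1)$-dimensional copula $C$, write $C(\boldsymbol{\alpha},v)=C(\alpha_1,\ldots,\alpha_d,v)$. For a random variable $Z$ with distribution function $F$, $F^{-1}(t)=\inf\{x\in\mathbb{R}:F(x)\ge t\}$ and $\mathrm{VaR}_t(Z)=F^{-1}(t)$. A distortion function is a nondecreasing function $h:[0,1]\to[0,1]$ with $h(0)=0$ and $h(1)=1$. *)

theory Defs
  imports "HOL-Probability.Probability"
begin

(* Points of [0,1]^(d+1) are represented as functions u :: nat => real, where
   coordinates 0..d-1 are the "alpha"/U/X coordinates and coordinate d is the
   v/V/Y coordinate; coordinates > d are ignored.  C(alpha, v) is C (alpha(d := v)). *)

definition dfun :: "'a measure \<Rightarrow> ('a \<Rightarrow> real) \<Rightarrow> real \<Rightarrow> real" where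
  "dfun M Z = cdf (distr M borel Z)"

definition is_copula :: "nat \<Rightarrow> ((nat \<Rightarrow> real) \<Rightarrow> real) \<Rightarrow> bool" where
  "is_copula d C \<longleftrightarrow>
     (\<exists>N. prob_space N \<and> sets N = sets (PiM {..d} (\<lambda>_. borel :: real measure)) \<and>
          (\<forall>i\<le>d. \<forall>t\<in>{0..1}. measure N {x \<in> space N. x i \<le> t} = t) \<and>
          (\<forall>u. (\<forall>i\<le>d. u i \<in> {0..1}) \<longrightarrow>
                C u = measure N {x \<in> space N. \<forall>i\<le>d. x i \<le> u i}))"

definition has_copula ::
  "'a measure \<Rightarrow> nat \<Rightarrow> (nat \<Rightarrow> 'a \<Rightarrow> real) \<Rightarrow> ('a \<Rightarrow> real) \<Rightarrow> ((nat \<Rightarrow> real) \<Rightarrow> real) \<Rightarrow> bool" where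
  "has_copula M d X Y C \<longleftrightarrow> is_copula d C \<and>
     (\<forall>x y. measure M {\<omega> \<in> space M. (\<forall>i<d. X i \<omega> \<le> x i) \<and> Y \<omega> \<le> y}
            = C (\<lambda>i. if i < d then dfun M (X i) (x i) else dfun M Y y))"

definition cond_dfun :: "'a measure \<Rightarrow> 'a set \<Rightarrow> ('a \<Rightarrow> real) \<Rightarrow> real \<Rightarrow> real" where
  "cond_dfun M A Z z = measure M ({\<omega> \<in> space M. Z \<omega> \<le> z} \<inter> A) / measure M A"

(* Value-at-Risk VaR_t(Z) = F^{-1}(t) = inf {x. F(x) >= t}, taken in the extended
   reals so that VaR_0(Z) = -infinity as with the usual convention inf R = -infinity. *)
definition VaR :: "'a measure \<Rightarrow> ('a \<Rightarrow> real) \<Rightarrow> real \<Rightarrow> ereal" where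
  "VaR M Z t = Inf {ereal x | x. dfun M Z x \<ge> t}"

definition distortion :: "(real \<Rightarrow> real) \<Rightarrow> bool" where
  "distortion h \<longleftrightarrow> mono_on {0..1} h \<and> h ` {0..1} \<subseteq> {0..1} \<and> h 0 = 0 \<and> h 1 = 1"

end

theory Submission
  imports Defs
begin

lemma dfun_eq: "Z \<in> borel_measurable M \<Longrightarrow> dfun M Z x = measure M {\<omega>\<in>space M. Z \<omega> \<le> x}"
  unfolding dfun_def cdf_def
  by (subst measure_distr) (auto simp: vimage_def Int_def conj_commute intro!: arg_cong[where f="measure M"])

lemma unif_dfun:
  assumes "distr N borel Z = uniform_measure lborel {0..1::real}" "t \<in> {0..1}"
  shows "dfun N Z t = t"
proof -
  have "dfun N Z t = measure (uniform_measure lborel {0..1::real}) {..t}"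
    unfolding dfun_def cdf_def assms(1) ..
  also have "\<dots> = measure lborel ({0..1} \<inter> {..t}) / measure lborel {0..1::real}"
    by (subst measure_uniform_measure) auto
  also have "{0..1} \<inter> {..t} = {0..t}" using assms(2) by auto
  finally show ?thesis using assms(2) by simp
qed

lemma VaR_zero: "VaR M Z 0 = -\<infinity>"
proof -
  have "{ereal x |x. 0 \<le> dfun M Z x} = range ereal"
    apply (auto simp: dfun_def cdf_def)
    subgoal for x by (cases x) auto
    done
  then have "VaR M Z 0 = Inf (range ereal)" unfolding VaR_def by simp
  moreover have "Inf (range ereal) = -\<infinity>"
  proof (cases "Inf (range ereal)")
    case (real r)
    have "Inf (range ereal) \<le> ereal (r - 1)" by (rule Inf_lower) auto
    then show ?thesis using real by simp
  next
    case PInf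
    have "Inf (range ereal) \<le> ereal 0" by (rule Inf_lower) auto
    then show ?thesis using PInf by simp
  qed simp
  ultimately show ?thesis by simp
qed

lemma copula_cong:
  assumes "is_copula d C" "\<forall>i\<le>d. u i \<in> {0..1}" "\<forall>i\<le>d. u' i = u i"
  shows "C u = C u'"
proof -
  obtain N where N: "\<forall>u. (\<forall>i\<le>d. u i \<in> {0..1}) \<longrightarrow> C u = measure N {x \<in> space N. \<forall>i\<le>d. x i \<le> u i}"
    using assms(1) unfolding is_copula_def by blast
  show ?thesis using N[rule_format, of u] N[rule_format, of u'] assms(2,3) by auto
qed

lemma VaR_real:
  assumes M: "prob_space M" and Z: "Z \<in> borel_measurable M"
    and c: "continuous_on UNIV (dfun M Z)" and a: "0 < a" "a < 1"
  shows "\<exists>q. VaR M Z a = ereal q \<and> dfun M Z q = a"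
proof -
  interpret R: real_distribution "distr M borel Z"
    using prob_space.real_distribution_distr[OF M] Z by simp
  let ?F = "dfun M Z"
  have F: "?F = cdf (distr M borel Z)" by (simp add: dfun_def)
  have mono: "?F x \<le> ?F y" if "x \<le> y" for x y using R.cdf_nondecreasing[OF that] F by simp
  have top: "(?F \<longlongrightarrow> 1) at_top" using R.cdf_lim_at_top_prob F by simp
  have bot: "(?F \<longlongrightarrow> 0) at_bot" using R.cdf_lim_at_bot F by simp
  have "eventually (\<lambda>x. ?F x > a) at_top" using order_tendstoD(1)[OF top] a by simp
  then obtain c where c1: "?F c > a" unfolding eventually_at_top_linorder by auto
  have "eventually (\<lambda>x. ?F x < a) at_bot" using order_tendstoD(2)[OF bot] a by simp
  then obtain b where b1: "?F b < a" unfolding eventually_at_bot_linorder by auto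
  define S where "S = {x. a \<le> ?F x}"
  have Sne: "S \<noteq> {}" using c1 unfolding S_def by (auto intro: less_imp_le)
  have Sb: "b \<le> x" if "x \<in> S" for x
  proof (rule ccontr)
    assume "\<not> b \<le> x"
    then have "?F x \<le> ?F b" by (intro mono) simp
    then show False using that b1 unfolding S_def by simp
  qed
  have bdd: "bdd_below S" by (rule bdd_belowI, rule Sb)
  have cl: "closed S" unfolding S_def by (intro closed_Collect_le continuous_on_const c)
  define q where "q = Inf S"
  have qS: "q \<in> S" unfolding q_def by (rule closed_contains_Inf[OF Sne bdd cl])
  have lt: "?F x < a" if "x < q" for x
  proof (rule ccontr)
    assume "\<not> ?F x < a"
    then have "x \<in> S" unfolding S_def by simp
    then have "q \<le> x" unfolding q_def by (rule cInf_lower[OF _ bdd])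
    then show False using that by simp
  qed
  have "continuous (at q) ?F" using c by (simp add: continuous_on_eq_continuous_within)
  then have "continuous (at q within {..<q}) ?F" by (rule continuous_within_subset) simp
  then have lim: "(?F \<longlongrightarrow> ?F q) (at_left q)" by (simp add: continuous_within)
  have ev: "eventually (\<lambda>x. ?F x \<le> a) (at_left q)"
    unfolding eventually_at_filter by (rule always_eventually) (auto intro: less_imp_le lt)
  have "?F q \<le> a" by (rule tendsto_upperbound[OF lim ev]) simp
  with qS have Fq: "?F q = a" unfolding S_def by simp
  have "VaR M Z a = Inf (ereal ` S)" unfolding VaR_def S_def by (auto intro!: arg_cong[where f=Inf])
  also have "\<dots> = ereal q" unfolding q_def by (rule ereal_Inf'[OF bdd Sne, symmetric])
  finally show ?thesis using Fq by blast
qed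

lemma sets_le1:
  fixes f :: "'a \<Rightarrow> real"
  assumes "f \<in> borel_measurable M"
  shows "{\<omega>\<in>space M. f \<omega> \<le> c} \<in> sets M"
proof -
  have "{\<omega>\<in>space M. f \<omega> \<le> c} = f -` {..c} \<inter> space M" by auto
  then show ?thesis using measurable_sets[OF assms borel_closed[OF closed_atMost[of c]]] by simp
qed

lemma sets_all_le:
  fixes d :: nat and f :: "nat \<Rightarrow> 'a \<Rightarrow> real"
  assumes "\<forall>i<d. f i \<in> borel_measurable M"
  shows "{\<omega>\<in>space M. \<forall>i<d. f i \<omega> \<le> c i} \<in> sets M"
proof -
  have "{\<omega>\<in>space M. \<forall>i<d. f i \<omega> \<le> c i} = {\<omega>\<in>space M. \<forall>i\<in>{..<d}. f i \<omega> \<le> c i}" by auto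
  also have "\<dots> \<in> sets M"
  proof (rule sets.sets_Collect_finite_All)
    fix i assume "i \<in> {..<d}"
    then show "{\<omega>\<in>space M. f i \<omega> \<le> c i} \<in> sets M" using assms by (intro sets_le1) auto
  qed simp
  finally show ?thesis .
qed

theorem lemma3p2:
  fixes M :: "'a measure" and X :: "nat \<Rightarrow> 'a \<Rightarrow> real" and Y :: "'a \<Rightarrow> real"
    and N :: "'b measure" and U :: "nat \<Rightarrow> 'b \<Rightarrow> real" and V :: "'b \<Rightarrow> real"
    and C :: "(nat \<Rightarrow> real) \<Rightarrow> real" and d :: nat and \<alpha> :: "nat \<Rightarrow> real"
  assumes d: "d \<ge> 1"
    and M: "prob_space M"
    and Xrv: "\<forall>i<d. X i \<in> borel_measurable M" and Yrv: "Y \<in> borel_measurable M"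
    and Xcont: "\<forall>i<d. continuous_on UNIV (dfun M (X i))"
    and Ycont: "continuous_on UNIV (dfun M Y)"
    and XC: "has_copula M d X Y C"
    and N: "prob_space N"
    and Urv: "\<forall>i<d. U i \<in> borel_measurable N" and Vrv: "V \<in> borel_measurable N"
    and Uunif: "\<forall>i<d. distr N borel (U i) = uniform_measure lborel {0..1}"
    and Vunif: "distr N borel V = uniform_measure lborel {0..1}"
    and UC: "has_copula N d U V C"
    and \<alpha>: "\<forall>i<d. \<alpha> i \<in> {0..<1}"
    and C1: "C (\<alpha>(d := 1)) < 1"
  defines "AU \<equiv> {\<omega> \<in> space N. \<exists>i<d. U i \<omega> > \<alpha> i}"
    and "AX \<equiv> {\<omega> \<in> space M. \<exists>i<d. ereal (X i \<omega>) > VaR M (X i) (\<alpha> i)}"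
  shows "(\<forall>v\<in>{0..1}. cond_dfun N AU V v = (v - C (\<alpha>(d := v))) / (1 - C (\<alpha>(d := 1))))
       \<and> distortion (\<lambda>v. (v - C (\<alpha>(d := v))) / (1 - C (\<alpha>(d := 1))))
       \<and> (\<forall>y. cond_dfun M AX Y y = cond_dfun N AU V (dfun M Y y))"
proof -
  interpret M: prob_space M by (rule M)
  interpret N: prob_space N by (rule N)
  have Cc: "is_copula d C" using UC unfolding has_copula_def by blast
  have Ua: "dfun N (U i) (\<alpha> i) = \<alpha> i" if "i < d" for i
    using unif_dfun[of N "U i" "\<alpha> i"] Uunif \<alpha> that by auto
  have Vv: "dfun N V v = v" if "v \<in> {0..1}" for v
    using unif_dfun[OF Vunif that] .
  define Vs where "Vs v = {\<omega>\<in>space N. V \<omega> \<le> v}" for v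
  have Vs_sets: "Vs v \<in> sets N" for v unfolding Vs_def by (rule sets_le1[OF Vrv])
  have PVs: "measure N (Vs v) = v" if "v \<in> {0..1}" for v
    using Vv[OF that] dfun_eq[OF Vrv, of v] unfolding Vs_def by simp
  define BU where "BU = {\<omega>\<in>space N. \<forall>i<d. U i \<omega> \<le> \<alpha> i}"
  have BU_sets: "BU \<in> sets N" unfolding BU_def by (rule sets_all_le[OF Urv])
  have AU: "AU = space N - BU" unfolding AU_def BU_def by (auto simp: not_le)
  have C_eq: "C (\<alpha>(d := v)) = measure N (BU \<inter> Vs v)" if v: "v \<in> {0..1}" for v
  proof -
    have "measure N (BU \<inter> Vs v) = measure N {\<omega> \<in> space N. (\<forall>i<d. U i \<omega> \<le> \<alpha> i) \<and> V \<omega> \<le> v}"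
      unfolding BU_def Vs_def by (auto intro!: arg_cong[where f="measure N"])
    also have "\<dots> = C (\<lambda>i. if i < d then dfun N (U i) (\<alpha> i) else dfun N V v)"
      using UC unfolding has_copula_def by blast
    also have "(\<lambda>i. if i < d then dfun N (U i) (\<alpha> i) else dfun N V v) = (\<lambda>i. if i < d then \<alpha> i else v)"
      using Ua Vv[OF v] by (auto simp: fun_eq_iff)
    also have "C (\<lambda>i. if i < d then \<alpha> i else v) = C (\<alpha>(d := v))"
      by (rule copula_cong[OF Cc]) (use \<alpha> v in auto)
    finally show ?thesis by simp
  qed
  have num: "measure N (Vs v \<inter> AU) = v - C (\<alpha>(d := v))" if v: "v \<in> {0..1}" for v
  proof -
    have "Vs v \<inter> AU = Vs v - (BU \<inter> Vs v)" unfolding AU Vs_def by auto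
    then have "measure N (Vs v \<inter> AU) = measure N (Vs v) - measure N (BU \<inter> Vs v)"
      using N.finite_measure_Diff[of "Vs v" "BU \<inter> Vs v"] Vs_sets BU_sets by auto
    then show ?thesis using PVs[OF v] C_eq[OF v] by simp
  qed
  have PBU: "measure N BU = C (\<alpha>(d := 1))"
  proof -
    have "measure N (BU - (BU \<inter> Vs 1)) \<le> measure N (space N - Vs 1)"
      by (rule N.finite_measure_mono) (use Vs_sets in \<open>auto simp: BU_def\<close>)
    also have "\<dots> = 0" using N.prob_compl[OF Vs_sets[of 1]] PVs[of 1] by simp
    finally have "measure N (BU - (BU \<inter> Vs 1)) = 0" by (simp add: antisym)
    moreover have "measure N (BU - (BU \<inter> Vs 1)) = measure N BU - measure N (BU \<inter> Vs 1)"
      using N.finite_measure_Diff[of BU "BU \<inter> Vs 1"] Vs_sets BU_sets by auto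
    ultimately show ?thesis using C_eq[of 1] by simp
  qed
  have PAU: "measure N AU = 1 - C (\<alpha>(d := 1))"
    unfolding AU using N.prob_compl[OF BU_sets] PBU by simp
  have PAUpos: "measure N AU > 0" using PAU C1 by simp
  have cdN: "cond_dfun N AU V v = measure N (Vs v \<inter> AU) / measure N AU" for v
    unfolding cond_dfun_def Vs_def ..
  have partA: "\<forall>v\<in>{0..1}. cond_dfun N AU V v = (v - C (\<alpha>(d := v))) / (1 - C (\<alpha>(d := 1)))"
    using num PAU cdN by simp
  define h where "h v = (v - C (\<alpha>(d := v))) / (1 - C (\<alpha>(d := 1)))" for v
  have h_eq: "h v = measure N (Vs v \<inter> AU) / measure N AU" if "v \<in> {0..1}" for v
    using num[OF that] PAU unfolding h_def by simp
  have AU_sets: "AU \<in> sets N" unfolding AU using BU_sets by auto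
  have partD: "distortion h"
    unfolding distortion_def
  proof (intro conjI)
    show "mono_on {0..1} h"
    proof (rule mono_onI)
      fix v w :: real assume "v \<in> {0..1}" "w \<in> {0..1}" "v \<le> w"
      moreover have "measure N (Vs v \<inter> AU) \<le> measure N (Vs w \<inter> AU)"
        by (rule N.finite_measure_mono) (use Vs_sets AU_sets \<open>v \<le> w\<close> in \<open>auto simp: Vs_def\<close>)
      ultimately show "h v \<le> h w" using h_eq PAUpos by (simp add: divide_right_mono)
    qed
    show "h ` {0..1} \<subseteq> {0..1}"
    proof
      fix z assume "z \<in> h ` {0..1}"
      then obtain v where v: "v \<in> {0..1}" "z = h v" by auto
      have "measure N (Vs v \<inter> AU) \<le> measure N AU"
        by (rule N.finite_measure_mono) (use AU_sets in auto)
      then show "z \<in> {0..1}" using v h_eq[OF v(1)] PAUpos by auto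
    qed
    have "measure N (Vs 0 \<inter> AU) \<le> measure N (Vs 0)"
      by (rule N.finite_measure_mono) (use Vs_sets in auto)
    then have "measure N (Vs 0 \<inter> AU) = 0" using PVs[of 0] by (simp add: antisym)
    then show "h 0 = 0" using h_eq[of 0] by simp
    show "h 1 = 1" unfolding h_def using C1 by simp
  qed
  define FY where "FY = dfun M Y"
  define Ys where "Ys y = {\<omega>\<in>space M. Y \<omega> \<le> y}" for y
  have Ys_sets: "Ys y \<in> sets M" for y unfolding Ys_def by (rule sets_le1[OF Yrv])
  have PYs: "measure M (Ys y) = FY y" for y unfolding FY_def Ys_def using dfun_eq[OF Yrv] by simp
  have FY01: "FY y \<in> {0..1}" for y
  proof -
    have "0 \<le> measure M (Ys y)" "measure M (Ys y) \<le> 1" by auto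
    then show ?thesis unfolding PYs by simp
  qed
  define BX where "BX = {\<omega>\<in>space M. \<forall>i<d. ereal (X i \<omega>) \<le> VaR M (X i) (\<alpha> i)}"
  have AX: "AX = space M - BX" unfolding AX_def BX_def by (auto simp: not_le)
  have key: "BX \<in> sets M \<and> (\<forall>y. measure M (BX \<inter> Ys y) = C (\<alpha>(d := FY y)))"
  proof (cases "\<forall>i<d. 0 < \<alpha> i")
    case True
    have "\<forall>i. \<exists>q. i < d \<longrightarrow> VaR M (X i) (\<alpha> i) = ereal q \<and> dfun M (X i) q = \<alpha> i"
      using VaR_real[OF M] Xrv Xcont True \<alpha> by (metis atLeastLessThan_iff)
    then obtain q where q: "\<And>i. i < d \<Longrightarrow> VaR M (X i) (\<alpha> i) = ereal (q i) \<and> dfun M (X i) (q i) = \<alpha> i"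
      by metis
    have BXq: "BX = {\<omega>\<in>space M. \<forall>i<d. X i \<omega> \<le> q i}" unfolding BX_def using q by auto
    have "measure M (BX \<inter> Ys y) = C (\<alpha>(d := FY y))" for y
    proof -
      have "measure M (BX \<inter> Ys y) = measure M {\<omega> \<in> space M. (\<forall>i<d. X i \<omega> \<le> q i) \<and> Y \<omega> \<le> y}"
        unfolding BXq Ys_def by (auto intro!: arg_cong[where f="measure M"])
      also have "\<dots> = C (\<lambda>i. if i < d then dfun M (X i) (q i) else dfun M Y y)"
        using XC unfolding has_copula_def by blast
      also have "(\<lambda>i. if i < d then dfun M (X i) (q i) else dfun M Y y) = (\<lambda>i. if i < d then \<alpha> i else FY y)"
        using q by (auto simp: fun_eq_iff FY_def)
      also have "C (\<lambda>i. if i < d then \<alpha> i else FY y) = C (\<alpha>(d := FY y))"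
        by (rule copula_cong[OF Cc]) (use \<alpha> FY01[of y] in auto)
      finally show ?thesis by simp
    qed
    moreover have "BX \<in> sets M" unfolding BXq by (rule sets_all_le[OF Xrv])
    ultimately show ?thesis by blast
  next
    case False
    then obtain j where j0: "j < d" "\<not> 0 < \<alpha> j" by blast
    then have j: "j < d" "\<alpha> j = 0" using \<alpha> by (auto simp: not_less intro: antisym)
    have "BX = {}" unfolding BX_def using j VaR_zero[of M "X j"] by auto
    moreover have "C (\<alpha>(d := t)) = 0" if t: "t \<in> {0..1}" for t
    proof -
      have "measure N (BU \<inter> Vs t) \<le> measure N {\<omega>\<in>space N. U j \<omega> \<le> \<alpha> j}"
        by (rule N.finite_measure_mono) (use j sets_le1[OF Urv[rule_format, OF j(1)]] in \<open>auto simp: BU_def\<close>)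
      also have "\<dots> = 0" using Ua[OF j(1)] dfun_eq[OF Urv[rule_format, OF j(1)]] j by simp
      finally show ?thesis using C_eq[OF t] by (simp add: antisym)
    qed
    ultimately show ?thesis using FY01 by simp
  qed
  have BX_sets: "BX \<in> sets M" using key by blast
  have Clip: "0 \<le> C (\<alpha>(d := s)) - C (\<alpha>(d := t)) \<and> C (\<alpha>(d := s)) - C (\<alpha>(d := t)) \<le> s - t"
    if "t \<le> s" "t \<in> {0..1}" "s \<in> {0..1}" for s t
  proof -
    have sub: "BU \<inter> Vs t \<subseteq> BU \<inter> Vs s" using that unfolding Vs_def by auto
    have "measure N (BU \<inter> Vs s - BU \<inter> Vs t) = measure N (BU \<inter> Vs s) - measure N (BU \<inter> Vs t)"
      using N.finite_measure_Diff[OF _ _ sub] BU_sets Vs_sets by auto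
    moreover have "measure N (BU \<inter> Vs s - BU \<inter> Vs t) \<le> measure N (Vs s - Vs t)"
      by (rule N.finite_measure_mono) (use Vs_sets in auto)
    moreover have "measure N (Vs s - Vs t) = s - t"
    proof -
      have "Vs t \<subseteq> Vs s" using that by (auto simp: Vs_def)
      then have "measure N (Vs s - Vs t) = measure N (Vs s) - measure N (Vs t)"
        using N.finite_measure_Diff Vs_sets by blast
      then show ?thesis using PVs that by simp
    qed
    moreover have "measure N (BU \<inter> Vs t) \<le> measure N (BU \<inter> Vs s)"
      by (rule N.finite_measure_mono[OF sub]) (use BU_sets Vs_sets in auto)
    ultimately show ?thesis using C_eq that by auto
  qed
  have bnd: "\<bar>measure M BX - C (\<alpha>(d := 1))\<bar> \<le> 1 - FY y" for y
  proof -
    have sub: "BX \<inter> Ys y \<subseteq> BX" by auto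
    have "measure M (BX - BX \<inter> Ys y) = measure M BX - measure M (BX \<inter> Ys y)"
      using M.finite_measure_Diff[OF _ _ sub] BX_sets Ys_sets by auto
    moreover have "measure M (BX - BX \<inter> Ys y) \<le> measure M (space M - Ys y)"
      by (rule M.finite_measure_mono) (use BX_sets Ys_sets sets.sets_into_space in auto)
    moreover have "measure M (space M - Ys y) = 1 - FY y"
      using M.prob_compl[OF Ys_sets] PYs by simp
    moreover have "measure M (BX \<inter> Ys y) \<le> measure M BX"
      by (rule M.finite_measure_mono[OF sub BX_sets])
    moreover have "0 \<le> measure M (BX \<inter> Ys y)" by simp
    ultimately show ?thesis using key Clip[of "FY y" 1] FY01[of y] by auto
  qed
  have PBX: "measure M BX = C (\<alpha>(d := 1))"
  proof (rule ccontr)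
    assume ne: "measure M BX \<noteq> C (\<alpha>(d := 1))"
    define e where "e = \<bar>measure M BX - C (\<alpha>(d := 1))\<bar>"
    have e: "e > 0" using ne unfolding e_def by simp
    interpret R: real_distribution "distr M borel Y"
      using M.real_distribution_distr Yrv by simp
    have "(FY \<longlongrightarrow> 1) at_top" using R.cdf_lim_at_top_prob by (simp add: FY_def dfun_def)
    then have "eventually (\<lambda>y. FY y > 1 - e) at_top" using e by (intro order_tendstoD(1)) auto
    then obtain y where "FY y > 1 - e" unfolding eventually_at_top_linorder by auto
    then show False using bnd[of y] unfolding e_def by simp
  qed
  have PAX: "measure M AX = 1 - C (\<alpha>(d := 1))"
    unfolding AX using M.prob_compl[OF BX_sets] PBX by simp
  have partB: "\<forall>y. cond_dfun M AX Y y = cond_dfun N AU V (dfun M Y y)"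
  proof
    fix y
    have "Ys y \<inter> AX = Ys y - BX \<inter> Ys y" unfolding AX Ys_def by auto
    then have "measure M (Ys y \<inter> AX) = FY y - C (\<alpha>(d := FY y))"
      using M.finite_measure_Diff[of "Ys y" "BX \<inter> Ys y"] BX_sets Ys_sets PYs key by auto
    then have "cond_dfun M AX Y y = (FY y - C (\<alpha>(d := FY y))) / (1 - C (\<alpha>(d := 1)))"
      unfolding cond_dfun_def using PAX by (simp add: Ys_def)
    then show "cond_dfun M AX Y y = cond_dfun N AU V (dfun M Y y)"
      using partA FY01[of y] unfolding FY_def by simp
  qed
  show ?thesis using partA partD partB unfolding h_def[abs_def] by blast
qed

end
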